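(* Let $\mu\in\mathcal{M}^+(\mathbb{R}^d)$ be compactly supported and let $V$ be a measure vector field satisfying (V1). Then for $N$ sufficiently large, $$\|\mu-\mathcal{A}_N^x(\mu)\|_{BL^*}\le\sqrt d\,\Delta_N^2\|\mu\|_{BL^*},\qquad \|V[\mu]-\mathcal{A}_N^v(V[\mu])\|_{BL^*}\le 2\sqrt d\,\Delta_N\|\mu\|_{BL^*}.$$
   Context: A measure vector field is a map $V:\mathcal{M}^+(\mathbb{R}^d)\to\mathcal{M}^+(\mathbb{R}^d\times\mathbb{R}^d)$ ($\mathcal{M}^+$: finite nonnegative Borel measures) with $\pi_1^{\#}V[\mu]=\mu$, $\pi_1(x,v)=x$; (V1): there is $C_S>0$ with $\sup_{(x,v)\in\operatorname{supp}V[\mu]}|v|\le C_S(1+\sup_{(x,v)\in\operatorname{supp}V[\mu]}|x|)$. $\|f\|_{BL}=\max(\sup|f|,\operatorname{Lip}(f))$, $\|\mu\|_{BL^*}=\sup\{\int\psi\,d\mu:\|\psi\|_{BL}\le1\}$ (on $\mathbb{R}^d$ or $\mathbb{R}^{2d}$). For $N\in\mathbb{N}$ let $\Delta_N=1/N$; let $x_1,\dots,x_I$ enumerate $(N^{-2}\mathbb{Z}^d)\cap[-N,N]^d$ and $v_1,\dots,v_J$ enumerate $(N^{-1}\mathbb{Z}^d)\cap[-N,N]^d$; set $Q_i=x_i+[0,\Delta_N^2)^d$, $Q'_j=v_j+[0,\Delta_N)^d$. Define $\mathcal{A}_N^x(\mu)=\sum_{i=1}^I\mu(Q_i)\delta_{x_i}$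 and, for $W\in\mathcal{M}^+(\mathbb{R}^d\times\mathbb{R}^d)$, $\mathcal{A}_N^v(W)=\sum_{i=1}^I\sum_{j=1}^J W(Q_i\times Q'_j)\delta_{(x_i,v_j)}$. *)

theory Defs
  imports "HOL-Analysis.Analysis"
begin

definition finite_borel_measure :: "'a::topological_space measure \<Rightarrow> bool" where
  "finite_borel_measure M \<longleftrightarrow> sets M = sets borel \<and> finite_measure M"

definition msupp :: "'a::metric_space measure \<Rightarrow> 'a set" where
  "msupp M = {z. \<forall>e>0. emeasure M (ball z e) > 0}"

definition measure_vector_field ::
  "('a::euclidean_space measure \<Rightarrow> ('a \<times> 'a) measure) \<Rightarrow> bool" where
  "measure_vector_field V \<longleftrightarrow>
     (\<forall>\<mu>. finite_borel_measure \<mu> \<longrightarrow>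
        finite_borel_measure (V \<mu>) \<and> distr (V \<mu>) borel fst = \<mu>)"

definition V1 :: "('a::euclidean_space measure \<Rightarrow> ('a \<times> 'a) measure) \<Rightarrow> bool" where
  "V1 V \<longleftrightarrow> (\<exists>C>0. \<forall>\<mu>. finite_borel_measure \<mu> \<longrightarrow>
      (SUP z\<in>msupp (V \<mu>). ereal (norm (snd z)))
        \<le> ereal C * (1 + (SUP z\<in>msupp (V \<mu>). ereal (norm (fst z)))))"

definition BL1 :: "('a::metric_space \<Rightarrow> real) set" where
  "BL1 = {\<psi>. (\<forall>x. \<bar>\<psi> x\<bar> \<le> 1) \<and> 1-lipschitz_on UNIV \<psi>}"

definition bl_norm :: "'a::metric_space measure \<Rightarrow> real" where
  "bl_norm M = (SUP \<psi>\<in>BL1. integral\<^sup>L M \<psi>)"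

definition bl_dist :: "'a::metric_space measure \<Rightarrow> 'a measure \<Rightarrow> real" where
  "bl_dist M M' = (SUP \<psi>\<in>BL1. integral\<^sup>L M \<psi> - integral\<^sup>L M' \<psi>)"

definition grid :: "real \<Rightarrow> nat \<Rightarrow> 'a::euclidean_space set" where
  "grid h N = {x. \<forall>b\<in>Basis. (\<exists>k::int. x \<bullet> b = real_of_int k * h) \<and> \<bar>x \<bullet> b\<bar> \<le> real N}"

definition grid_x :: "nat \<Rightarrow> 'a::euclidean_space set" where
  "grid_x N = grid (1 / real N ^ 2) N"

definition grid_v :: "nat \<Rightarrow> 'a::euclidean_space set" where
  "grid_v N = grid (1 / real N) N"

definition cube :: "'a::euclidean_space \<Rightarrow> real \<Rightarrow> 'a set" where
  "cube x h = {y. \<forall>b\<in>Basis. x \<bullet> b \<le> y \<bullet> b \<and> y \<bullet> b < x \<bullet> b + h}"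

definition dirac_sum :: "'a::topological_space set \<Rightarrow> ('a \<Rightarrow> ennreal) \<Rightarrow> 'a measure" where
  "dirac_sum G w = measure_of UNIV (sets borel) (\<lambda>A. \<Sum>x\<in>G. w x * indicator A x)"

definition approx_x :: "nat \<Rightarrow> 'a::euclidean_space measure \<Rightarrow> 'a measure" where
  "approx_x N \<mu> = dirac_sum (grid_x N) (\<lambda>x. emeasure \<mu> (cube x (1 / real N ^ 2)))"

definition approx_v :: "nat \<Rightarrow> ('a::euclidean_space \<times> 'a) measure \<Rightarrow> ('a \<times> 'a) measure" where
  "approx_v N W = dirac_sum (grid_x N \<times> grid_v N)
     (\<lambda>(x, v). emeasure W (cube x (1 / real N ^ 2) \<times> cube v (1 / real N)))"

end

theory Submission imports Defs begin

definition proj :: "real \<Rightarrow> 'a::euclidean_space \<Rightarrow> 'a" where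
  "proj h y = (\<Sum>b\<in>Basis. (of_int \<lfloor>(y \<bullet> b) / h\<rfloor> * h) *\<^sub>R b)"

lemma proj_inner: "b \<in> Basis \<Longrightarrow> proj h y \<bullet> b = of_int \<lfloor>(y \<bullet> b) / h\<rfloor> * h"
  unfolding proj_def by (simp add: inner_sum_left inner_Basis if_distrib cong: if_cong)

lemma proj_meas[measurable]: "proj h \<in> borel_measurable borel"
  unfolding proj_def by measurable

lemma floor_bounds_h:
  assumes "h > 0"
  shows "of_int \<lfloor>t / h\<rfloor> * h \<le> t" "t < of_int \<lfloor>t / h\<rfloor> * h + h"
proof -
  have a: "of_int \<lfloor>t / h\<rfloor> \<le> t / h" "t / h < of_int \<lfloor>t / h\<rfloor> + 1" by linarith+
  from a(1) show "of_int \<lfloor>t / h\<rfloor> * h \<le> t" using assms by (simp add: le_divide_eq)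
  from a(2) have "t < (of_int \<lfloor>t / h\<rfloor> + 1) * h" using assms by (simp add: divide_less_eq)
  thus "t < of_int \<lfloor>t / h\<rfloor> * h + h" by (simp add: distrib_right)
qed

lemma proj_dist:
  fixes y :: "'a::euclidean_space"
  assumes "h > 0"
  shows "dist y (proj h y) \<le> sqrt (real DIM('a)) * h"
proof -
  have c: "((y - proj h y) \<bullet> b)^2 \<le> h^2" if "b \<in> Basis" for b
  proof -
    have "(y - proj h y) \<bullet> b = y \<bullet> b - of_int \<lfloor>(y \<bullet> b) / h\<rfloor> * h"
      using that by (simp add: inner_diff_left proj_inner)
    moreover note floor_bounds_h[OF assms, of "y \<bullet> b"]
    ultimately have "0 \<le> (y - proj h y) \<bullet> b" "(y - proj h y) \<bullet> b \<le> h" by linarith+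
    thus ?thesis by (intro power_mono) auto
  qed
  have "(norm (y - proj h y))^2 = (y - proj h y) \<bullet> (y - proj h y)"
    by (simp add: power2_norm_eq_inner)
  also have "\<dots> = (\<Sum>b\<in>Basis. ((y - proj h y) \<bullet> b)^2)"
    by (subst euclidean_inner) (simp add: power2_eq_square)
  also have "\<dots> \<le> (\<Sum>b\<in>(Basis::'a set). h^2)"
    by (rule sum_mono) (use c in auto)
  also have "\<dots> = (sqrt (real DIM('a)) * h)^2" by (simp add: power_mult_distrib)
  finally have "norm (y - proj h y) \<le> sqrt (real DIM('a)) * h"
    by (rule power2_le_imp_le) (use assms in auto)
  thus ?thesis by (simp add: dist_norm)
qed

lemma proj_preimage:
  fixes x :: "'a::euclidean_space"
  assumes "h > 0" and "\<forall>b\<in>Basis. \<exists>k::int. x \<bullet> b = real_of_int k * h"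
  shows "proj h -` {x} = cube x h"
proof -
  have "proj h y = x \<longleftrightarrow> y \<in> cube x h" for y
  proof -
    have "proj h y = x \<longleftrightarrow> (\<forall>b\<in>Basis. proj h y \<bullet> b = x \<bullet> b)"
      by (simp add: euclidean_eq_iff[of "proj h y" x])
    also have "\<dots> \<longleftrightarrow> (\<forall>b\<in>Basis. x \<bullet> b \<le> y \<bullet> b \<and> y \<bullet> b < x \<bullet> b + h)"
    proof (intro ball_cong refl)
      fix b :: 'a assume b: "b \<in> Basis"
      then obtain k :: int where k: "x \<bullet> b = real_of_int k * h" using assms by blast
      have "proj h y \<bullet> b = x \<bullet> b \<longleftrightarrow> \<lfloor>(y \<bullet> b) / h\<rfloor> = k"
        using b k assms by (simp add: proj_inner)
      also have "\<dots> \<longleftrightarrow> real_of_int k \<le> (y \<bullet> b) / h \<and> (y \<bullet> b) / h < real_of_int k + 1"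
        by (rule floor_eq_iff)
      also have "\<dots> \<longleftrightarrow> real_of_int k * h \<le> y \<bullet> b \<and> y \<bullet> b < real_of_int k * h + h"
        using assms by (simp only: pos_le_divide_eq pos_divide_less_eq distrib_right mult_1_left)
      finally show "proj h y \<bullet> b = x \<bullet> b \<longleftrightarrow> x \<bullet> b \<le> y \<bullet> b \<and> y \<bullet> b < x \<bullet> b + h"
        using k by simp
    qed
    finally show ?thesis by (simp add: cube_def)
  qed
  thus ?thesis by auto
qed

lemma proj_grid:
  fixes y :: "'a::euclidean_space"
  assumes m: "m > 0" and h: "h = 1 / real m" and y: "\<forall>b\<in>Basis. \<bar>y \<bullet> b\<bar> \<le> real N"
  shows "proj h y \<in> grid h N"
  unfolding grid_def
proof (intro CollectI ballI conjI)
  fix b :: 'a assume b: "b \<in> Basis"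
  show "\<exists>k::int. proj h y \<bullet> b = real_of_int k * h" using b by (simp add: proj_inner)
  have hp: "h > 0" using m h by simp
  have yb: "- real N \<le> y \<bullet> b" "y \<bullet> b \<le> real N" using y b by auto
  have up: "proj h y \<bullet> b \<le> real N"
    using floor_bounds_h(1)[OF hp, of "y \<bullet> b"] yb b by (simp add: proj_inner)
  have "y \<bullet> b / h = y \<bullet> b * real m" using h by simp
  also have "\<dots> \<ge> - real N * real m" using yb m by (intro mult_right_mono) auto
  finally have "of_int (- int (N * m)) \<le> y \<bullet> b / h" by simp
  hence "- int (N * m) \<le> \<lfloor>y \<bullet> b / h\<rfloor>" by (simp only: le_floor_iff)
  hence "real_of_int (- int (N * m)) \<le> real_of_int \<lfloor>y \<bullet> b / h\<rfloor>" by linarith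
  hence "real_of_int (- int (N * m)) * h \<le> real_of_int \<lfloor>y \<bullet> b / h\<rfloor> * h"
    using hp by (intro mult_right_mono) auto
  moreover have "real_of_int (- int (N * m)) * h = - real N" using h m by simp
  ultimately have "- real N \<le> real_of_int \<lfloor>y \<bullet> b / h\<rfloor> * h" by linarith
  hence "- real N \<le> proj h y \<bullet> b" using b by (simp add: proj_inner)
  with up show "\<bar>proj h y \<bullet> b\<bar> \<le> real N" by linarith
qed

lemma msupp_null:
  fixes M :: "'b::{metric_space, second_countable_topology} measure"
  assumes "sets M = sets borel"
  shows "- msupp M \<in> null_sets M"
proof -
  define F where "F = {ball z e | z e. e > 0 \<and> emeasure M (ball z e) = 0}"
  have "\<And>S. S \<in> F \<Longrightarrow> open S" unfolding F_def by blast
  then obtain F' where F': "F' \<subseteq> F" "countable F'" "\<Union>F' = \<Union>F" by (rule Lindelof)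
  have eq: "- msupp M = \<Union>F"
  proof
    show "- msupp M \<subseteq> \<Union>F"
    proof
      fix z assume "z \<in> - msupp M"
      then obtain e where "e > 0" "\<not> emeasure M (ball z e) > 0" unfolding msupp_def by auto
      hence "emeasure M (ball z e) = 0" by (simp add: not_less)
      hence "ball z e \<in> F" unfolding F_def using \<open>e > 0\<close> by blast
      moreover have "z \<in> ball z e" using \<open>e > 0\<close> by simp
      ultimately show "z \<in> \<Union>F" by blast
    qed
  next
    show "\<Union>F \<subseteq> - msupp M"
    proof
      fix z assume "z \<in> \<Union>F"
      then obtain z0 e0 where z: "z \<in> ball z0 e0" "e0 > 0" "emeasure M (ball z0 e0) = 0"
        unfolding F_def by blast
      define e where "e = e0 - dist z0 z"
      have e: "e > 0" using z by (simp add: e_def)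
      have sub: "ball z e \<subseteq> ball z0 e0"
      proof
        fix y assume "y \<in> ball z e"
        hence "dist z y < e" by simp
        moreover have "dist z0 y \<le> dist z0 z + dist z y" by (rule dist_triangle)
        ultimately show "y \<in> ball z0 e0" by (simp add: e_def)
      qed
      have "emeasure M (ball z e) \<le> emeasure M (ball z0 e0)"
        by (rule emeasure_mono[OF sub]) (simp add: assms)
      hence "emeasure M (ball z e) = 0" using z by simp
      thus "z \<in> - msupp M" unfolding msupp_def using e by auto
    qed
  qed
  have "(\<Union>S\<in>F'. S) \<in> null_sets M"
  proof (rule null_sets_UN'[OF F'(2)])
    fix S assume "S \<in> F'"
    hence "S \<in> F" using F' by auto
    then obtain z e where "S = ball z e" "emeasure M (ball z e) = 0" unfolding F_def by blast
    thus "S \<in> null_sets M" using assms by (simp add: null_sets_def)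
  qed
  thus ?thesis using eq F' by simp
qed

lemma dirac_sum_distr:
  fixes M :: "'b::metric_space measure" and p :: "'b \<Rightarrow> 'b"
  assumes sM: "sets M = sets borel"
    and p[measurable]: "p \<in> borel_measurable borel"
    and G: "finite G"
    and K: "K \<in> sets borel" "- K \<in> null_sets M"
    and pK: "p ` K \<subseteq> G"
    and w: "\<And>x. x \<in> G \<Longrightarrow> w x = emeasure M (p -` {x})"
  shows "dirac_sum G w = distr M borel p"
proof -
  have spM: "space M = UNIV" using sets_eq_imp_space_eq[OF sM] by simp
  have pM: "p \<in> measurable M borel" unfolding measurable_cong_sets[OF sM refl] using p .
  have sing: "p -` {x} \<in> sets M" for x :: 'b
  proof -
    have "{x} \<in> sets (borel :: 'b measure)" by (rule borel_closed) simp
    from measurable_sets[OF pM this] show ?thesis using spM by simp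
  qed
  have Kc: "- K \<in> sets M" using K(2) by auto
  have Kin: "K \<in> sets M" using K(1) sM by simp
  have D: "distr M borel p = measure_of UNIV (sets borel) (emeasure (distr M borel p))"
    using measure_of_of_measure[of "distr M borel p"] by simp
  have key: "(\<Sum>x\<in>G. w x * indicator A x) = emeasure (distr M borel p) A" if A: "A \<in> sets borel" for A
  proof -
    have pA: "p -` A \<in> sets M" using pM A by (metis measurable_sets spM Int_UNIV_right)
    have "emeasure (distr M borel p) A = emeasure M (p -` A)"
      using emeasure_distr[OF pM A] spM by simp
    also have "\<dots> = emeasure M (p -` A - (- K))"
      using emeasure_Diff_null_set[OF K(2) pA] by simp
    also have "p -` A - (- K) = (\<Union>x\<in>G \<inter> A. p -` {x} - (- K))"
      using pK by auto
    also have "emeasure M \<dots> = (\<Sum>x\<in>G \<inter> A. emeasure M (p -` {x} - (- K)))"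
    proof (rule sum_emeasure[symmetric])
      show "(\<lambda>x. p -` {x} - - K) ` (G \<inter> A) \<subseteq> sets M"
        using sing Kin by auto
      show "disjoint_family_on (\<lambda>x. p -` {x} - - K) (G \<inter> A)"
        unfolding disjoint_family_on_def by auto
      show "finite (G \<inter> A)" using G by simp
    qed
    also have "\<dots> = (\<Sum>x\<in>G \<inter> A. w x)"
    proof (rule sum.cong[OF refl])
      fix x assume "x \<in> G \<inter> A"
      moreover note sing[of x]
      ultimately show "emeasure M (p -` {x} - - K) = w x"
        using emeasure_Diff_null_set[OF K(2)] w by simp
    qed
    also have "\<dots> = (\<Sum>x\<in>G. w x * indicator A x)"
      using G by (simp add: sum.inter_restrict indicator_def if_distrib cong: if_cong)
    finally show ?thesis by simp
  qed
  show ?thesis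
    unfolding dirac_sum_def
    apply (subst D)
    apply (rule measure_of_eq)
     apply simp
    using key by (simp add: sets.sigma_sets_eq[of borel, simplified])
qed

lemma BL1_const: "\<bar>c\<bar> \<le> 1 \<Longrightarrow> (\<lambda>_. c) \<in> BL1"
proof -
  assume "\<bar>c\<bar> \<le> 1"
  moreover have "1-lipschitz_on UNIV (\<lambda>_. c)" by (rule lipschitz_on_le[OF lipschitz_on_constant]) simp
  ultimately show ?thesis unfolding BL1_def by simp
qed

lemma BL1_meas: "\<psi> \<in> BL1 \<Longrightarrow> \<psi> \<in> borel_measurable borel"
  unfolding BL1_def by (auto intro!: borel_measurable_continuous_onI lipschitz_on_continuous_on)

lemma BL1_int:
  assumes "finite_borel_measure M" "\<psi> \<in> BL1" "f \<in> borel_measurable borel"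
  shows "integrable M (\<lambda>x. \<psi> (f x))"
proof -
  interpret finite_measure M using assms(1) by (simp add: finite_borel_measure_def)
  have sM: "sets M = sets borel" using assms(1) by (simp add: finite_borel_measure_def)
  have "(\<lambda>x. \<psi> (f x)) \<in> borel_measurable borel" using BL1_meas[OF assms(2)] assms(3) by measurable
  hence m: "(\<lambda>x. \<psi> (f x)) \<in> borel_measurable M" unfolding measurable_cong_sets[OF sM refl] .
  show ?thesis
    by (rule integrable_const_bound[where B=1]) (use assms(2) m in \<open>auto simp: BL1_def\<close>)
qed

lemma mass_le_bl_norm:
  assumes "finite_borel_measure M"
  shows "measure M UNIV \<le> bl_norm M"
proof -
  interpret finite_measure M using assms(1) by (simp add: finite_borel_measure_def)
  have sM: "sets M = sets borel" using assms(1) by (simp add: finite_borel_measure_def)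
  have spM: "space M = UNIV" using sets_eq_imp_space_eq[OF sM] by simp
  have bd: "integral\<^sup>L M \<psi> \<le> measure M UNIV" if "\<psi> \<in> BL1" for \<psi>
  proof -
    have "integral\<^sup>L M \<psi> \<le> integral\<^sup>L M (\<lambda>_. 1::real)"
      apply (rule integral_mono)
      using BL1_int[OF assms that, of "\<lambda>x. x"] apply simp
       apply simp
      using that unfolding BL1_def by (simp add: abs_le_iff)
    thus ?thesis using spM by simp
  qed
  have "integral\<^sup>L M (\<lambda>_. 1::real) \<le> bl_norm M"
    unfolding bl_norm_def
    by (rule cSUP_upper[OF BL1_const]) (use bd in \<open>auto intro!: bdd_aboveI2\<close>)
  thus ?thesis using spM by simp
qed

lemma bl_dist_distr:
  fixes M :: "'b::{metric_space, second_countable_topology} measure" and p :: "'b \<Rightarrow> 'b"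
  assumes fM: "finite_borel_measure M" and p[measurable]: "p \<in> borel_measurable borel"
    and d: "\<And>y. dist y (p y) \<le> c"
  shows "bl_dist M (distr M borel p) \<le> c * measure M UNIV"
proof -
  interpret finite_measure M using fM by (simp add: finite_borel_measure_def)
  have sM: "sets M = sets borel" using fM by (simp add: finite_borel_measure_def)
  have spM: "space M = UNIV" using sets_eq_imp_space_eq[OF sM] by simp
  have pM: "p \<in> measurable M borel" unfolding measurable_cong_sets[OF sM refl] using p .
  show ?thesis
    unfolding bl_dist_def
  proof (rule cSUP_least)
    show "BL1 \<noteq> {}" using BL1_const[of 0] by auto
    fix \<psi> :: "'b \<Rightarrow> real" assume psi: "\<psi> \<in> BL1"
    have i1: "integrable M \<psi>" using BL1_int[OF fM psi, of "\<lambda>x. x"] by simp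
    have i2: "integrable M (\<lambda>x. \<psi> (p x))" using BL1_int[OF fM psi p] .
    have "integral\<^sup>L (distr M borel p) \<psi> = integral\<^sup>L M (\<lambda>x. \<psi> (p x))"
      by (rule integral_distr[OF pM BL1_meas[OF psi]])
    hence "integral\<^sup>L M \<psi> - integral\<^sup>L (distr M borel p) \<psi> = integral\<^sup>L M (\<lambda>x. \<psi> x - \<psi> (p x))"
      using i1 i2 by simp
    also have "\<dots> \<le> integral\<^sup>L M (\<lambda>_. c)"
    proof (rule integral_mono)
      show "integrable M (\<lambda>x. \<psi> x - \<psi> (p x))" using i1 i2 by simp
      show "integrable M (\<lambda>_. c)" by simp
      fix x
      have "dist (\<psi> x) (\<psi> (p x)) \<le> 1 * dist x (p x)"
        using psi unfolding BL1_def by (intro lipschitz_onD) auto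
      thus "\<psi> x - \<psi> (p x) \<le> c" using d[of x] by (simp add: dist_real_def)
    qed
    also have "\<dots> = c * measure M UNIV" using spM by simp
    finally show "integral\<^sup>L M \<psi> - integral\<^sup>L (distr M borel p) \<psi> \<le> c * measure M UNIV" .
  qed
qed

lemma grid_finite:
  assumes h: "h > 0"
  shows "finite (grid h N :: 'a::euclidean_space set)"
proof -
  define S where "S = {r::real. \<exists>k::int. r = real_of_int k * h \<and> \<bar>r\<bar> \<le> real N}"
  define n where "n = \<lceil>real N / h\<rceil>"
  have "S \<subseteq> (\<lambda>k::int. real_of_int k * h) ` {-n..n}"
  proof
    fix r assume "r \<in> S"
    then obtain k :: int where k: "r = real_of_int k * h" "\<bar>r\<bar> \<le> real N" unfolding S_def by blast
    have "\<bar>real_of_int k\<bar> * h \<le> real N" using k h by (simp add: abs_mult)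
    hence "\<bar>real_of_int k\<bar> \<le> real N / h" using h by (simp add: pos_le_divide_eq)
    hence "\<bar>k\<bar> \<le> n" unfolding n_def by linarith
    hence "k \<in> {-n..n}" by auto
    thus "r \<in> (\<lambda>k::int. real_of_int k * h) ` {-n..n}" using k by blast
  qed
  hence fS: "finite S" by (rule finite_subset) simp
  have "inj_on (\<lambda>x::'a. restrict (\<lambda>b. x \<bullet> b) Basis) (grid h N)"
  proof (rule inj_onI)
    fix x y :: 'a assume "restrict (\<lambda>b. x \<bullet> b) Basis = restrict (\<lambda>b. y \<bullet> b) Basis"
    hence "\<forall>b\<in>Basis. x \<bullet> b = y \<bullet> b" by (metis restrict_apply')
    thus "x = y" by (simp add: euclidean_eq_iff[of x y])
  qed
  moreover have "(\<lambda>x::'a. restrict (\<lambda>b. x \<bullet> b) Basis) ` (grid h N) \<subseteq> PiE Basis (\<lambda>_. S)"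
    unfolding grid_def S_def by auto
  moreover have "finite (PiE (Basis::'a set) (\<lambda>_. S))" using fS by (simp add: finite_PiE)
  ultimately show ?thesis by (rule inj_on_finite)
qed

lemma grid_mem_int: "x \<in> grid h N \<Longrightarrow> \<forall>b\<in>Basis. \<exists>k::int. x \<bullet> b = real_of_int k * h"
  unfolding grid_def by auto

lemma fst_borel: "fst \<in> borel_measurable (borel :: ('a::euclidean_space \<times> 'a) measure)"
  by (intro borel_measurable_continuous_onI continuous_on_fst continuous_on_id)

lemma snd_borel: "snd \<in> borel_measurable (borel :: ('a::euclidean_space \<times> 'a) measure)"
  by (intro borel_measurable_continuous_onI continuous_on_snd continuous_on_id)

lemma pair_proj_meas:
  "(\<lambda>z. (proj h (fst z), proj k (snd z))) \<in> borel_measurable (borel :: ('a::euclidean_space \<times> 'a) measure)"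
proof -
  have "(\<lambda>z. (proj h (fst z), proj k (snd z))) \<in> measurable (borel :: ('a \<times> 'a) measure) (borel \<Otimes>\<^sub>M borel)"
    using fst_borel snd_borel by measurable
  thus ?thesis by (simp add: borel_prod)
qed

theorem proposition4p1:
  fixes \<mu> :: "'a::euclidean_space measure"
    and V :: "'a measure \<Rightarrow> ('a \<times> 'a) measure"
  assumes "finite_borel_measure \<mu>"
    and "compact (msupp \<mu>)"
    and "measure_vector_field V"
    and "V1 V"
  shows "\<exists>N0::nat. \<forall>N\<ge>N0.
     bl_dist \<mu> (approx_x N \<mu>) \<le> sqrt (real DIM('a)) * (1 / real N) ^ 2 * bl_norm \<mu> \<and>
     bl_dist (V \<mu>) (approx_v N (V \<mu>)) \<le> 2 * sqrt (real DIM('a)) * (1 / real N) * bl_norm \<mu>"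
proof -
  note fmu = assms(1)
  define W where "W = V \<mu>"
  have fW: "finite_borel_measure W" and dW: "distr W borel fst = \<mu>"
    using assms(3) fmu unfolding measure_vector_field_def W_def by auto
  have smu: "sets \<mu> = sets borel" using fmu by (simp add: finite_borel_measure_def)
  have sW: "sets W = sets borel" using fW by (simp add: finite_borel_measure_def)
  have spW: "space W = UNIV" using sets_eq_imp_space_eq[OF sW] by simp
  have fstW: "fst \<in> measurable W borel" unfolding measurable_cong_sets[OF sW refl] by (rule fst_borel)
  obtain C where C: "C > 0" and CV: "(SUP z\<in>msupp W. ereal (norm (snd z)))
        \<le> ereal C * (1 + (SUP z\<in>msupp W. ereal (norm (fst z))))"
    using assms(4) fmu unfolding V1_def W_def by blast
  obtain R where R: "\<forall>z\<in>msupp \<mu>. norm z \<le> R"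
    using compact_imp_bounded[OF assms(2)] unfolding bounded_iff by blast
  define R1 where "R1 = max R 0"
  define R2 where "R2 = C * (1 + R1)"
  have R1: "\<forall>z\<in>msupp \<mu>. norm z \<le> R1" using R unfolding R1_def by force
  have R1p: "R1 \<ge> 0" unfolding R1_def by simp
  have R2p: "R2 \<ge> 0" unfolding R2_def using C R1p by simp
  have fst_supp: "fst z \<in> msupp \<mu>" if z: "z \<in> msupp W" for z
    unfolding msupp_def
  proof (intro CollectI allI impI)
    fix e :: real assume e: "e > 0"
    have sub: "ball z e \<subseteq> fst -` ball (fst z) e \<inter> space W"
    proof
      fix y assume "y \<in> ball z e"
      hence "dist (fst z) (fst y) < e" using dist_fst_le[of z y] by simp
      thus "y \<in> fst -` ball (fst z) e \<inter> space W" using spW by simp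
    qed
    have "0 < emeasure W (ball z e)" using z e unfolding msupp_def by auto
    also have "emeasure W (ball z e) \<le> emeasure W (fst -` ball (fst z) e \<inter> space W)"
      by (rule emeasure_mono[OF sub]) (use measurable_sets[OF fstW, of "ball (fst z) e"] in simp)
    also have "\<dots> = emeasure (distr W borel fst) (ball (fst z) e)"
      by (rule emeasure_distr[symmetric, OF fstW]) simp
    finally show "0 < emeasure \<mu> (ball (fst z) e)" using dW by simp
  qed
  have supW: "msupp W \<subseteq> cball 0 R1 \<times> cball 0 R2"
  proof
    fix z assume z: "z \<in> msupp W"
    have "(SUP z\<in>msupp W. ereal (norm (fst z))) \<le> ereal R1"
      using R1 fst_supp by (intro SUP_least) auto
    hence "ereal C * (1 + (SUP z\<in>msupp W. ereal (norm (fst z)))) \<le> ereal C * (1 + ereal R1)"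
      using C by (intro ereal_mult_left_mono add_mono) auto
    also have "\<dots> = ereal R2" unfolding R2_def by simp
    finally have "(SUP z\<in>msupp W. ereal (norm (snd z))) \<le> ereal R2" using CV by (rule order_trans[rotated])
    moreover have "ereal (norm (snd z)) \<le> (SUP z\<in>msupp W. ereal (norm (snd z)))"
      using z by (rule SUP_upper)
    ultimately have "ereal (norm (snd z)) \<le> ereal R2" by (rule order_trans[rotated])
    hence "norm (snd z) \<le> R2" by simp
    moreover have "norm (fst z) \<le> R1" using R1 fst_supp[OF z] by auto
    ultimately show "z \<in> cball 0 R1 \<times> cball 0 R2" by (cases z) auto
  qed
  have null1: "- cball 0 R1 \<in> null_sets \<mu>"
    by (rule null_sets_subset[OF msupp_null[OF smu]]) (use R1 smu in auto)
  have null2: "- (cball 0 R1 \<times> cball 0 R2) \<in> null_sets W"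
  proof (rule null_sets_subset[OF msupp_null[OF sW]])
    have "closed (cball (0::'a) R1 \<times> cball (0::'a) R2)" by (simp add: closed_Times)
    hence "open (- (cball (0::'a) R1 \<times> cball (0::'a) R2))" by (simp add: open_Compl)
    thus "- (cball 0 R1 \<times> cball 0 R2) \<in> sets W" using sW by simp
    show "- (cball 0 R1 \<times> cball 0 R2) \<subseteq> - msupp W" using supW by auto
  qed
  have massW: "measure W UNIV = measure \<mu> UNIV"
    using measure_distr[OF fstW, of UNIV] dW spW by simp
  define N0 where "N0 = max 1 (nat \<lceil>max R1 R2\<rceil>)"
  show ?thesis
  proof (intro exI allI impI conjI)
    fix N assume N: "N0 \<le> N"
    have N1: "N \<ge> 1" using N unfolding N0_def by simp
    have NR1: "R1 \<le> real N" and NR2: "R2 \<le> real N" using N unfolding N0_def by linarith+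
    define h where "h = 1 / real N ^ 2"
    define k where "k = 1 / real N"
    have hp: "h > 0" and kp: "k > 0" unfolding h_def k_def using N1 by auto
    have hk: "h \<le> k" unfolding h_def k_def using N1
      by (simp add: field_simps power2_eq_square)
    have h2: "h = 1 / real (N^2)" unfolding h_def by simp
    have reg: "\<forall>b\<in>Basis. \<bar>y \<bullet> b\<bar> \<le> real N" if "norm y \<le> real N" for y :: 'a
      using Basis_le_norm that by (metis order_trans)
    have ax: "approx_x N \<mu> = distr \<mu> borel (proj h)"
      unfolding approx_x_def h_def[symmetric] grid_x_def
    proof (rule dirac_sum_distr[OF smu proj_meas grid_finite[OF hp]])
      show "cball (0::'a) R1 \<in> sets borel" by simp
      show "- cball 0 R1 \<in> null_sets \<mu>" by (rule null1)
      show "proj h ` cball (0::'a) R1 \<subseteq> grid h N"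
      proof
        fix x assume "x \<in> proj h ` cball (0::'a) R1"
        then obtain y where y: "x = proj h y" "norm y \<le> R1" by auto
        show "x \<in> grid h N" unfolding y(1)
          by (rule proj_grid[of "N^2" h y N]) (use N1 h2 reg[of y] y(2) NR1 in auto)
      qed
      fix x assume "x \<in> (grid h N :: 'a set)"
      thus "emeasure \<mu> (cube x h) = emeasure \<mu> (proj h -` {x})"
        using proj_preimage[OF hp grid_mem_int[of x h N]] by simp
    qed
    have "bl_dist \<mu> (approx_x N \<mu>) \<le> sqrt (real DIM('a)) * h * measure \<mu> UNIV"
      unfolding ax by (rule bl_dist_distr[OF fmu proj_meas proj_dist[OF hp]])
    also have "\<dots> \<le> sqrt (real DIM('a)) * h * bl_norm \<mu>"
      using mass_le_bl_norm[OF fmu] hp by (intro mult_left_mono) auto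
    also have "h = (1 / real N) ^ 2" unfolding h_def by (simp add: power_one_over)
    finally show "bl_dist \<mu> (approx_x N \<mu>) \<le> sqrt (real DIM('a)) * (1 / real N) ^ 2 * bl_norm \<mu>" .
    define p where "p = (\<lambda>z::'a \<times> 'a. (proj h (fst z), proj k (snd z)))"
    have pm: "p \<in> borel_measurable borel" unfolding p_def by (rule pair_proj_meas)
    have pre: "p -` {(x, v)} = cube x h \<times> cube v k" if "x \<in> grid h N" "v \<in> grid k N" for x v
    proof -
      have "p -` {(x, v)} = proj h -` {x} \<times> proj k -` {v}" unfolding p_def by auto
      thus ?thesis using proj_preimage[OF hp grid_mem_int[OF that(1)]]
        proj_preimage[OF kp grid_mem_int[OF that(2)]] by simp
    qed
    have av: "approx_v N W = distr W borel p"
      unfolding approx_v_def h_def[symmetric] k_def[symmetric] grid_x_def grid_v_def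
    proof (rule dirac_sum_distr[OF sW pm])
      show "finite (grid h N \<times> grid k N :: ('a \<times> 'a) set)"
        by (intro finite_cartesian_product grid_finite hp kp)
      show "cball 0 R1 \<times> cball 0 R2 \<in> sets borel"
        by (rule borel_closed) (simp add: closed_Times)
      show "- (cball 0 R1 \<times> cball 0 R2) \<in> null_sets W" by (rule null2)
      show "p ` (cball 0 R1 \<times> cball 0 R2) \<subseteq> grid h N \<times> grid k N"
      proof
        fix z assume "z \<in> p ` (cball (0::'a) R1 \<times> cball (0::'a) R2)"
        then obtain x v where z: "z = p (x, v)" "norm x \<le> R1" "norm v \<le> R2" by auto
        have "proj h x \<in> grid h N"
          by (rule proj_grid[of "N^2" h x N]) (use N1 h2 reg[of x] z(2) NR1 in auto)
        moreover have "proj k v \<in> grid k N"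
          by (rule proj_grid[of "N" k v N]) (use N1 k_def reg[of v] z(3) NR2 in auto)
        ultimately show "z \<in> grid h N \<times> grid k N" unfolding z(1) p_def by simp
      qed
      fix z assume "z \<in> (grid h N \<times> grid k N :: ('a \<times> 'a) set)"
      then obtain x v where z: "z = (x, v)" "x \<in> grid h N" "v \<in> grid k N" by auto
      show "(case z of (x, v) \<Rightarrow> emeasure W (cube x h \<times> cube v k)) = emeasure W (p -` {z})"
        using pre[OF z(2,3)] z(1) by simp
    qed
    have pd: "dist z (p z) \<le> 2 * sqrt (real DIM('a)) * k" for z
    proof -
      obtain x v where z: "z = (x, v)" by (cases z)
      have "dist z (p z) = norm (x - proj h x, v - proj k v)"
        unfolding z p_def dist_norm by simp
      also have "\<dots> \<le> norm (x - proj h x) + norm (v - proj k v)" by (rule norm_Pair_le)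
      also have "\<dots> \<le> sqrt (real DIM('a)) * h + sqrt (real DIM('a)) * k"
        using proj_dist[OF hp, of x] proj_dist[OF kp, of v] by (simp add: dist_norm)
      also have "\<dots> \<le> sqrt (real DIM('a)) * k + sqrt (real DIM('a)) * k"
        using hk by (intro add_mono mult_left_mono) auto
      finally show ?thesis by (simp add: mult.commute mult.left_commute)
    qed
    have "bl_dist W (approx_v N W) \<le> 2 * sqrt (real DIM('a)) * k * measure W UNIV"
      unfolding av by (rule bl_dist_distr[OF fW pm pd])
    also have "\<dots> \<le> 2 * sqrt (real DIM('a)) * k * bl_norm \<mu>"
      using mass_le_bl_norm[OF fmu] kp massW by (intro mult_left_mono) auto
    finally show "bl_dist (V \<mu>) (approx_v N (V \<mu>)) \<le> 2 * sqrt (real DIM('a)) * (1 / real N) * bl_norm \<mu>"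
      unfolding W_def k_def .
  qed
qed

end
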